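(* Let $\ell,k$ be integers with $1\le\ell\le k$. Then $\overline{\alpha}(\{1,2k,2k+2\ell\})\ge\frac{2k}{4k+2\ell}$.
   Context: For a finite set $S$ of positive integers, the distance graph $G(S)$ has vertex set $\mathbb{Z}$, with $i,j$ adjacent iff $|i-j|\in S$. The density of $A\subseteq\mathbb{Z}$ is $\delta(A)=\limsup_{N\to\infty}\frac{|A\cap[-N,N]|}{2N+1}$, and the independence ratio $\overline{\alpha}(S)$ is the supremum of $\delta(A)$ over independent sets $A$ of $G(S)$. *)

theory Defs
  imports "HOL-Analysis.Analysis"
begin

definition dist_adj :: "nat set \<Rightarrow> int \<Rightarrow> int \<Rightarrow> bool" where
  "dist_adj S i j \<longleftrightarrow> \<bar>i - j\<bar> \<in> int ` S"

definition dist_independent :: "nat set \<Rightarrow> int set \<Rightarrow> bool" where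
  "dist_independent S A \<longleftrightarrow> (\<forall>i\<in>A. \<forall>j\<in>A. \<not> dist_adj S i j)"

definition upper_density :: "int set \<Rightarrow> ereal" where
  "upper_density A = limsup (\<lambda>N::nat. ereal (real (card (A \<inter> {- int N..int N})) / (2 * real N + 1)))"

definition independence_ratio :: "nat set \<Rightarrow> ereal" where
  "independence_ratio S = (SUP A\<in>{A. dist_independent S A}. upper_density A)"

end

theory Submission
  imports Defs
begin

lemma lim_aux:
  fixes c :: real and p :: nat
  assumes "p \<ge> 1"
  shows "(\<lambda>n::nat. c - c / (2 * real (n*p) + 1)) \<longlonglongrightarrow> c"
proof -
  have le: "real x \<le> 2 * real (x * p) + 1" for x
  proof -
    have "x \<le> x * p" using assms by simp
    then have "real x \<le> real (x*p)" by linarith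
    then show ?thesis by simp
  qed
  have "filterlim (\<lambda>n::nat. 2 * real (n*p) + 1) at_top sequentially"
    by (rule filterlim_at_top_mono[OF filterlim_real_sequentially])
       (use le in \<open>auto intro!: always_eventually\<close>)
  then have "filterlim (\<lambda>n::nat. 2 * real (n*p) + 1) at_infinity sequentially"
    using at_top_le_at_infinity filterlim_mono by blast
  then have "(\<lambda>n::nat. c / (2 * real (n*p) + 1)) \<longlonglongrightarrow> 0"
    by (intro tendsto_divide_0[OF tendsto_const])
  then show ?thesis using tendsto_diff[OF tendsto_const, of _ 0 sequentially c] by simp
qed

definition RR :: "int \<Rightarrow> int set" where
  "RR k = {r. \<exists>i. 0 \<le> i \<and> i < k \<and> (r = 2*i \<or> r = 2*k+1+2*i)}"

lemma RR_card:
  assumes "k \<ge> 0"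
  shows "card (RR k) = nat (2*k)"
proof -
  have "RR k = (\<lambda>i. 2*i) ` {0..<k} \<union> (\<lambda>i. 2*k+1+2*i) ` {0..<k}"
    unfolding RR_def by auto
  moreover have "card ((\<lambda>i. 2*i) ` {0..<k}) = nat k"
    by (subst card_image) (auto simp: inj_on_def)
  moreover have "card ((\<lambda>i. 2*k+1+2*i) ` {0..<k}) = nat k"
    by (subst card_image) (auto simp: inj_on_def)
  moreover have "(\<lambda>i. 2*i) ` {0..<k} \<inter> (\<lambda>i. 2*k+1+2*i) ` {0..<k} = {}"
    by auto
  ultimately show ?thesis using assms
    by (simp add: card_Un_disjoint)
qed


lemma indep:
  fixes k l :: int
  assumes "1 \<le> l" "l \<le> k"
  defines "p \<equiv> 4*k + 2*l"
  shows "dist_independent {1, nat (2*k), nat (2*k + 2*l)} {x. x mod p \<in> RR k}"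
  unfolding dist_independent_def dist_adj_def
proof (intro ballI notI)
  fix x y assume x: "x \<in> {x. x mod p \<in> RR k}" and y: "y \<in> {x. x mod p \<in> RR k}"
    and d: "\<bar>x - y\<bar> \<in> int ` {1, nat (2*k), nat (2*k + 2*l)}"
  have pp: "p > 0" using assms unfolding p_def by simp
  define a where "a = x mod p"
  define b where "b = y mod p"
  define t where "t = x div p - y div p"
  have xy: "x - y = p * t + (a - b)" unfolding a_def b_def t_def
    by (simp add: algebra_simps)
  obtain i where i: "0 \<le> i" "i < k" "a = 2*i \<or> a = 2*k+1+2*i" using x unfolding RR_def a_def by auto
  obtain j where j: "0 \<le> j" "j < k" "b = 2*j \<or> b = 2*k+1+2*j" using y unfolding RR_def b_def by auto
  have dd: "x - y \<in> {1, -1, 2*k, -2*k, 2*k+2*l, -(2*k+2*l)}" using d assms by auto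
  have ab: "a - b < p" "b - a < p" using i j assms unfolding p_def by auto
  have "t \<in> {-1,0,1}"
  proof (rule ccontr)
    assume "t \<notin> {-1,0,1}"
    then have "t \<ge> 2 \<or> t \<le> -2" by auto
    then show False
    proof
      assume "t \<ge> 2"
      then have "p * t \<ge> p * 2" using pp by simp
      then show False using xy dd ab assms unfolding p_def by auto
    next
      assume "t \<le> -2"
      then have "p * t \<le> p * (-2)" using pp by (metis mult_left_mono less_imp_le)
      then show False using xy dd ab assms unfolding p_def by auto
    qed
  qed
  then have "x - y = a - b \<or> x - y = a - b + p \<or> x - y = a - b - p" using xy by auto
  then show False using dd i j assms unfolding p_def by auto presburger+
qed


lemma count:
  fixes k l n :: nat
  assumes "1 \<le> l" "l \<le> k"
  defines "p \<equiv> 4*k + 2*l"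
  shows "real (2*n*(2*k)) \<le> real (card ({x. x mod int p \<in> RR (int k)} \<inter> {- int (n*p)..int (n*p)}))"
proof -
  define f where "f = (\<lambda>(q::int, r::int). q * int p + r)"
  have rr: "0 \<le> r \<and> r < int p" if "r \<in> RR (int k)" for r
    using that assms unfolding RR_def p_def by auto
  have inj: "inj_on f ({- int n..<int n} \<times> RR (int k))"
  proof (rule inj_onI, clarify)
    fix q r q' r' assume a: "r \<in> RR (int k)" "r' \<in> RR (int k)" "f (q, r) = f (q', r')"
    then have e: "q * int p + r = q' * int p + r'" unfolding f_def by simp
    have "(q * int p + r) mod int p = r" using rr[OF a(1)] by simp
    moreover have "(q' * int p + r') mod int p = r'" using rr[OF a(2)] by simp
    ultimately have "r = r'" using e by simp
    then show "q = q' \<and> r = r'" using e assms unfolding p_def by simp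
  qed
  have sub: "f ` ({- int n..<int n} \<times> RR (int k)) \<subseteq> {x. x mod int p \<in> RR (int k)} \<inter> {- int (n*p)..int (n*p)}"
  proof clarify
    fix q r assume q: "q \<in> {- int n..<int n}" and r: "r \<in> RR (int k)"
    have r0: "0 \<le> r" "r < int p" using rr[OF r] by auto
    have "(q * int p + r) mod int p = r" using r0 by simp
    moreover have "- int n * int p \<le> q * int p" using q by (intro mult_right_mono) auto
    moreover have "q * int p \<le> (int n - 1) * int p" using q by (intro mult_right_mono) auto
    ultimately show "f (q, r) \<in> {x. x mod int p \<in> RR (int k)} \<inter> {- int (n*p)..int (n*p)}"
      using r0 r unfolding f_def by (auto simp: algebra_simps)
  qed
  have "card (f ` ({- int n..<int n} \<times> RR (int k))) = 2*n*(2*k)"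
    using inj RR_card[of "int k"] by (simp add: card_image card_cartesian_product nat_mult_distrib)
  moreover have "card (f ` ({- int n..<int n} \<times> RR (int k))) \<le> card ({x. x mod int p \<in> RR (int k)} \<inter> {- int (n*p)..int (n*p)})"
    by (rule card_mono[OF _ sub]) auto
  ultimately have "2*n*(2*k) \<le> card ({x. x mod int p \<in> RR (int k)} \<inter> {- int (n*p)..int (n*p)})" by simp
  then show ?thesis by (simp only: of_nat_le_iff)
qed

theorem lemma30:
  fixes k l :: nat
  assumes "1 \<le> l" and "l \<le> k"
  shows "ereal (real (2 * k) / real (4 * k + 2 * l))
           \<le> independence_ratio {1, 2 * k, 2 * k + 2 * l}"
proof -
  define p where "p = 4*k + 2*l"
  define c where "c = real (2 * k) / real p"
  define A where "A = {x. x mod int p \<in> RR (int k)}"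
  define F where "F = (\<lambda>N::nat. ereal (real (card (A \<inter> {- int N..int N})) / (2 * real N + 1)))"
  have p1: "p \<ge> 1" using assms unfolding p_def by simp
  have ind: "dist_independent {1, 2 * k, 2 * k + 2 * l} A"
  proof -
    have "{1, 2 * k, 2 * k + 2 * l} = {1, nat (2*int k), nat (2*int k + 2*int l)}" by auto
    moreover have "int p = 4 * int k + 2 * int l" unfolding p_def by simp
    ultimately show ?thesis using indep[of "int l" "int k"] assms unfolding A_def by simp
  qed
  have hb: "ereal (c - c / (2 * real (n*p) + 1)) \<le> (F \<circ> (\<lambda>n. n*p)) n" for n
  proof -
    have pos: "2 * real (n*p) + 1 > 0" proof -
      have "0 \<le> real (n*p)" by (rule of_nat_0_le_iff)
      then show ?thesis by linarith
    qed
    have "c - c / (2 * real (n*p) + 1) = real (2*n*(2*k)) / (2 * real (n*p) + 1)"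
    proof -
      have pr: "real p > 0" using p1 by simp
      define D where "D = 2 * real (n*p) + 1"
      have "c - c / D = c * (D - 1) / D" using pos unfolding D_def by (simp add: field_simps)
      also have "c * (D - 1) = real (2*n*(2*k))" unfolding c_def D_def using pr by simp
      finally show ?thesis unfolding D_def .
    qed
    also have "\<dots> \<le> real (card (A \<inter> {- int (n*p)..int (n*p)})) / (2 * real (n*p) + 1)"
      using count[OF assms, of n] pos unfolding A_def p_def by (simp add: divide_right_mono)
    finally show ?thesis unfolding F_def by simp
  qed
  have "(\<lambda>n. ereal (c - c / (2 * real (n*p) + 1))) \<longlonglongrightarrow> ereal c"
    using lim_aux[OF p1, of c] by (rule tendsto_ereal)
  then have "limsup (\<lambda>n. ereal (c - c / (2 * real (n*p) + 1))) = ereal c"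
    by (rule lim_imp_Limsup[rotated]) simp
  then have "ereal c = limsup (\<lambda>n. ereal (c - c / (2 * real (n*p) + 1)))" by simp
  also have "\<dots> \<le> limsup (F \<circ> (\<lambda>n. n*p))"
    by (rule Limsup_mono, rule always_eventually) (use hb in blast)
  also have "\<dots> \<le> limsup F"
    by (rule limsup_subseq_mono) (use p1 in \<open>simp add: strict_mono_def\<close>)
  also have "\<dots> = upper_density A" unfolding F_def upper_density_def by simp
  also have "\<dots> \<le> independence_ratio {1, 2 * k, 2 * k + 2 * l}"
    unfolding independence_ratio_def by (rule SUP_upper) (use ind in blast)
  finally have "ereal c \<le> independence_ratio {1, 2 * k, 2 * k + 2 * l}" .
  then show ?thesis unfolding c_def p_def .
qed

end
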